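(* Let $n \in \mathbb N$ and let $F\colon\mathbb R_+^n\to \mathbb R_+$ be an amenable function. If there exist constants $a, c \in \mathbb{R}$ with $0<a\leqslant c$ such that $F(\mathbf x)\in[a,c]$ for every $\mathbf x\in\mathbb R_+^n\setminus\{(0,\dots,0)\}$, then $F$ is $(n)$-b-metric preserving with constant $K = \max\{1, \frac{c}{2a}\}$; that is, for every collection of b-metric spaces $(X_i,d_i)$, $i=1,\dots,n$, the function $D(\mathbf x,\mathbf y)=F(d_1(x_1,y_1),\dots,d_n(x_n,y_n))$ on $\prod_{i=1}^nX_i$ is a b-metric satisfying $D(\mathbf x,\mathbf y)\leqslant K(D(\mathbf x,\mathbf z)+D(\mathbf z,\mathbf y))$ for all $\mathbf x,\mathbf y,\mathbf z$.
   Context: $\mathbb R_+=[0,\infty)$. $F$ is amenable if $F(\mathbf x)=0\iff\mathbf x=(0,\dots,0)$. A b-metric on $X$ is $d\colon X^2\to\mathbb R_+$ with $d(x,y)=0\iff x=y$, $d(x,y)=d(y,x)$, and for some $K\geqslant1$, $d(x,z)\leqslant K(d(x,y)+d(y,z))$ for all $x,y,z$ (the relaxation constants of the spaces $(X_i,d_i)$ are arbitrary). *)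

theory Defs
  imports Complex_Main "HOL-Library.FuncSet"
begin

definition nonneg_vec :: "nat \<Rightarrow> real list \<Rightarrow> bool" where
  "nonneg_vec n v \<longleftrightarrow> length v = n \<and> (\<forall>t\<in>set v. t \<ge> 0)"

definition amenable :: "nat \<Rightarrow> (real list \<Rightarrow> real) \<Rightarrow> bool" where
  "amenable n F \<longleftrightarrow> (\<forall>v. nonneg_vec n v \<longrightarrow> (F v = 0 \<longleftrightarrow> v = replicate n 0))"

definition bmetric_on :: "'a set \<Rightarrow> ('a \<Rightarrow> 'a \<Rightarrow> real) \<Rightarrow> real \<Rightarrow> bool" where
  "bmetric_on S d K \<longleftrightarrow> K \<ge> 1 \<and>
     (\<forall>x\<in>S. \<forall>y\<in>S. d x y \<ge> 0 \<and> (d x y = 0 \<longleftrightarrow> x = y) \<and> d x y = d y x) \<and>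
     (\<forall>x\<in>S. \<forall>y\<in>S. \<forall>z\<in>S. d x z \<le> K * (d x y + d y z))"

definition is_bmetric :: "'a set \<Rightarrow> ('a \<Rightarrow> 'a \<Rightarrow> real) \<Rightarrow> bool" where
  "is_bmetric S d \<longleftrightarrow> (\<exists>K. bmetric_on S d K)"

definition prod_dist :: "nat \<Rightarrow> (real list \<Rightarrow> real) \<Rightarrow> (nat \<Rightarrow> 'a \<Rightarrow> 'a \<Rightarrow> real)
    \<Rightarrow> (nat \<Rightarrow> 'a) \<Rightarrow> (nat \<Rightarrow> 'a) \<Rightarrow> real" where
  "prod_dist n F d x y = F (map (\<lambda>i. d i (x i) (y i)) [0..<n])"

end

theory Submission
  imports Defs
begin

lemma map_rep0: "(map f [0..<n] = replicate n (0::real)) \<longleftrightarrow> (\<forall>i<n. f i = 0)"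
  by (auto simp: list_eq_iff_nth_eq)

theorem proposition3p2:
  fixes n :: nat and F :: "real list \<Rightarrow> real" and a c :: real
  assumes "\<forall>v. nonneg_vec n v \<longrightarrow> F v \<ge> 0"
    and "amenable n F"
    and "0 < a" and "a \<le> c"
    and "\<forall>v. nonneg_vec n v \<and> v \<noteq> replicate n 0 \<longrightarrow> a \<le> F v \<and> F v \<le> c"
  shows "\<forall>(X :: nat \<Rightarrow> 'a set) d. (\<forall>i<n. is_bmetric (X i) (d i)) \<longrightarrow>
           bmetric_on (PiE {..<n} X) (prod_dist n F d) (max 1 (c / (2 * a)))"
proof (intro allI impI)
  fix X :: "nat \<Rightarrow> 'a set" and d
  assume hb: "\<forall>i<n. is_bmetric (X i) (d i)"
  define K where "K = max 1 (c / (2 * a))"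
  define D where "D = prod_dist n F d"
  have dprop: "d i p q \<ge> 0 \<and> (d i p q = 0 \<longleftrightarrow> p = q) \<and> d i p q = d i q p"
    if "i < n" "p \<in> X i" "q \<in> X i" for i p q
    using hb that unfolding is_bmetric_def bmetric_on_def by blast
  have nn: "nonneg_vec n (map (\<lambda>i. d i (x i) (y i)) [0..<n])"
    if "x \<in> PiE {..<n} X" "y \<in> PiE {..<n} X" for x y
    using that dprop unfolding nonneg_vec_def by (auto simp: PiE_iff)
  have D0: "D x y \<ge> 0 \<and> (D x y = 0 \<longleftrightarrow> x = y)"
    if "x \<in> PiE {..<n} X" "y \<in> PiE {..<n} X" for x y
  proof -
    have "D x y = 0 \<longleftrightarrow> (\<forall>i<n. d i (x i) (y i) = 0)"
      using assms(2) nn[OF that] unfolding D_def prod_dist_def amenable_def by (simp add: map_rep0)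
    also have "\<dots> \<longleftrightarrow> (\<forall>i<n. x i = y i)" using that dprop by (auto simp: PiE_iff)
    also have "\<dots> \<longleftrightarrow> x = y" using that
      by (metis PiE_ext lessThan_iff)
    finally show ?thesis using assms(1) nn[OF that] unfolding D_def prod_dist_def by blast
  qed
  have Dac: "a \<le> D x y \<and> D x y \<le> c"
    if "x \<in> PiE {..<n} X" "y \<in> PiE {..<n} X" "x \<noteq> y" for x y
  proof -
    have "D x y \<noteq> 0" using D0 that by blast
    then have "map (\<lambda>i. d i (x i) (y i)) [0..<n] \<noteq> replicate n 0"
      using assms(2) nn[OF that(1,2)] unfolding D_def prod_dist_def amenable_def by metis
    then show ?thesis using assms(5) nn[OF that(1,2)] unfolding D_def prod_dist_def by blast
  qed
  have Dsym: "D x y = D y x" if "x \<in> PiE {..<n} X" "y \<in> PiE {..<n} X" for x y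
  proof -
    have eq: "map (\<lambda>i. d i (x i) (y i)) [0..<n] = map (\<lambda>i. d i (y i) (x i)) [0..<n]"
      using that dprop by (auto simp: PiE_iff)
    show ?thesis unfolding D_def prod_dist_def eq by (rule refl)
  qed
  have K1: "K \<ge> 1" and K2: "K * (2 * a) \<ge> c" using assms(3)
    unfolding K_def by (auto simp: field_simps max_def)
  have tri: "D x z \<le> K * (D x y + D y z)"
    if xs: "x \<in> PiE {..<n} X" and ys: "y \<in> PiE {..<n} X" and zs: "z \<in> PiE {..<n} X" for x y z
  proof (cases "x = z")
    case True
    have "0 \<le> K * (D x y + D y z)" using D0[OF xs ys] D0[OF ys zs] K1
      by (intro mult_nonneg_nonneg) auto
    moreover have "D x z = 0" using D0[OF xs zs] True by blast
    ultimately show ?thesis by simp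
  next
    case False
    show ?thesis
    proof (cases "x = y")
      case True
      then have "D x y = 0" using D0 xs by blast
      then show ?thesis using True D0[OF ys zs] K1
        using mult_right_mono[of 1 K "D y z"] by simp
    next
      case xy: False
      show ?thesis
      proof (cases "y = z")
        case True
        then have "D y z = 0" using D0 zs by blast
        then show ?thesis using True D0[OF xs ys] K1
          using mult_right_mono[of 1 K "D x y"] by simp
      next
        case False
        have "D x z \<le> c" using Dac[OF xs zs \<open>x \<noteq> z\<close>] by simp
        also have "\<dots> \<le> K * (2 * a)" by (rule K2)
        also have "\<dots> \<le> K * (D x y + D y z)"
          using Dac[OF xs ys xy] Dac[OF ys zs False] K1 by (intro mult_left_mono) auto
        finally show ?thesis .
      qed
    qed
  qed
  show "bmetric_on (PiE {..<n} X) (prod_dist n F d) (max 1 (c / (2 * a)))"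
    unfolding bmetric_on_def D_def[symmetric] K_def[symmetric]
  proof (intro conjI ballI)
    show "1 \<le> K" by (rule K1)
  next
    fix x y assume "x \<in> PiE {..<n} X" "y \<in> PiE {..<n} X"
    then show "0 \<le> D x y" "(D x y = 0) = (x = y)" "D x y = D y x"
      using D0 Dsym by auto
  next
    fix x y z assume "x \<in> PiE {..<n} X" "y \<in> PiE {..<n} X" "z \<in> PiE {..<n} X"
    then show "D x z \<le> K * (D x y + D y z)" by (rule tri)
  qed
qed

end
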